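(* Let $\mathfrak{g}$ be a real filiform nilpotent Lie algebra of dimension $2n$, and let $e_1,\dots,e_{2n}$ be a basis such that for each $k=1,\dots,2n-2$ the term $\mathfrak{g}^k$ of the lower central series is spanned by $e_{2+k},\dots,e_{2n}$. Write $\hat k=2n+1-k$. If $[e_k,e_{\hat k}]\neq0$ for some $3\le k\le n$, then there is no positive filtration of $\mathfrak{g}$ with an adapted basis $f_1,\dots,f_{2n}$ whose weights $w_1,\dots,w_{2n}$ satisfy, with $\hat i=2n+1-i$: (F1) $0<w_1\le\dots\le w_{2n}$; (F2) $w_i+w_{\hat i}\ge w_{2n}$ and $w_i+w_{\hat i}>w_{2n-1}$ for all $i$; (F3) if $w_i+w_{\hat i}=w_{2n}$ and $w_i\neq w_{\hat i}$, then one of $w_i,w_{\hat i}$ has multiplicity at least two; (F4) if $w_i+w_{\hat i}=w_{2n}$ and $w_i=w_{\hat i}$, then either $i=\hat i$ or $w_i$ has multiplicity greater than two.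
   Context: Lower central series: $\mathfrak{g}^1=[\mathfrak{g},\mathfrak{g}]$, $\mathfrak{g}^{k+1}=[\mathfrak{g},\mathfrak{g}^k]$. A nilpotent Lie algebra of dimension $m$ is filiform if $\dim\mathfrak{g}^k=m-1-k$ for $1\le k\le m-2$. A positive filtration is a chain $\mathfrak{g}=L_1\supseteq L_2\supseteq\dots\supseteq L_N$ (not necessarily strict), with $L_k=0$ for $k>N$, such that $[L_i,L_j]\subseteq L_{i+j}$ for all positive integers $i,j$. The weight of a nonzero element is the largest $w$ with the element in $L_w$. An ordered basis is adapted if each $L_w$ is spanned by the last $\dim L_w$ basis elements; $w_i$ is the weight of the $i$-th basis element; the multiplicity of a value $\alpha$ is the number of $i$ with $w_i=\alpha$. *)

theory Defs
  imports Complex_Main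
begin

definition lie_algebra :: "('a::real_vector \<Rightarrow> 'a \<Rightarrow> 'a) \<Rightarrow> bool" where
  "lie_algebra br \<longleftrightarrow>
     (\<forall>x. linear (br x)) \<and> (\<forall>y. linear (\<lambda>x. br x y)) \<and>
     (\<forall>x. br x x = 0) \<and>
     (\<forall>x y z. br x (br y z) + br y (br z x) + br z (br x y) = 0)"

definition bracket_set :: "('a::real_vector \<Rightarrow> 'a \<Rightarrow> 'a) \<Rightarrow> 'a set \<Rightarrow> 'a set \<Rightarrow> 'a set" where
  "bracket_set br A B = span {br a b | a b. a \<in> A \<and> b \<in> B}"

fun lcs :: "('a::real_vector \<Rightarrow> 'a \<Rightarrow> 'a) \<Rightarrow> nat \<Rightarrow> 'a set" where
  "lcs br 0 = UNIV"
| "lcs br (Suc k) = bracket_set br UNIV (lcs br k)"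

definition nilpotent_lie :: "('a::real_vector \<Rightarrow> 'a \<Rightarrow> 'a) \<Rightarrow> bool" where
  "nilpotent_lie br \<longleftrightarrow> (\<exists>k. lcs br k = {0})"

definition filiform :: "('a::real_vector \<Rightarrow> 'a \<Rightarrow> 'a) \<Rightarrow> nat \<Rightarrow> bool" where
  "filiform br m \<longleftrightarrow> lie_algebra br \<and> nilpotent_lie br \<and> dim (UNIV::'a set) = m \<and>
     (\<forall>k. 1 \<le> k \<and> k \<le> m - 2 \<longrightarrow> dim (lcs br k) = m - 1 - k)"

definition ordered_basis :: "(nat \<Rightarrow> 'a::real_vector) \<Rightarrow> nat \<Rightarrow> bool" where
  "ordered_basis e m \<longleftrightarrow> inj_on e {1..m} \<and> independent (e ` {1..m}) \<and>
     span (e ` {1..m}) = UNIV"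

text \<open>Positive filtration L_1 \<supseteq> L_2 \<supseteq> ... (indices >= 1; L 0 is irrelevant),
  by subspaces, with L_1 = g, L_k = 0 for k > N, and [L_i, L_j] \<subseteq> L_(i+j).\<close>
definition positive_filtration :: "('a::real_vector \<Rightarrow> 'a \<Rightarrow> 'a) \<Rightarrow> (nat \<Rightarrow> 'a set) \<Rightarrow> bool" where
  "positive_filtration br L \<longleftrightarrow>
     (\<forall>k\<ge>1. subspace (L k)) \<and> L 1 = UNIV \<and> (\<forall>k\<ge>1. L (Suc k) \<subseteq> L k) \<and>
     (\<exists>N. \<forall>k>N. L k = {0}) \<and>
     (\<forall>i j x y. 1 \<le> i \<longrightarrow> 1 \<le> j \<longrightarrow> x \<in> L i \<longrightarrow> y \<in> L j \<longrightarrow> br x y \<in> L (i + j))"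

definition weight :: "(nat \<Rightarrow> 'a set) \<Rightarrow> 'a \<Rightarrow> nat" where
  "weight L x = (GREATEST w. 1 \<le> w \<and> x \<in> L w)"

definition adapted_basis :: "(nat \<Rightarrow> 'a::real_vector set) \<Rightarrow> (nat \<Rightarrow> 'a) \<Rightarrow> nat \<Rightarrow> bool" where
  "adapted_basis L f m \<longleftrightarrow> ordered_basis f m \<and>
     (\<forall>w\<ge>1. L w = span (f ` {m + 1 - dim (L w) .. m}))"

definition multiplicity_w :: "(nat \<Rightarrow> nat) \<Rightarrow> nat \<Rightarrow> nat \<Rightarrow> nat" where
  "multiplicity_w w m \<alpha> = card {i \<in> {1..m}. w i = \<alpha>}"

end

theory Submission
  imports Defs
begin

lemma PF_mono:
  assumes "positive_filtration br L" "1 \<le> c" "c \<le> d"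
  shows "L d \<subseteq> L c"
  using assms(3)
proof (induction d rule: dec_induct)
  case base then show ?case by simp
next
  case (step d)
  have "L (Suc d) \<subseteq> L d" using assms(1,2) step(1) unfolding positive_filtration_def by auto
  then show ?case using step by blast
qed

lemma PF_bound:
  assumes "positive_filtration br L" "x \<noteq> 0"
  shows "\<exists>N. \<forall>c. x \<in> L c \<longrightarrow> c \<le> N"
proof -
  obtain N where N: "\<forall>k>N. L k = {0}" using assms(1) unfolding positive_filtration_def by blast
  show ?thesis
    by (rule exI[of _ N]) (use N assms(2) in \<open>metis not_le singletonD\<close>)
qed

lemma weight_in:
  assumes "positive_filtration br L" "x \<noteq> 0"
  shows "x \<in> L (weight L x) \<and> 1 \<le> weight L x"
proof -
  obtain N where N: "\<forall>c. x \<in> L c \<longrightarrow> c \<le> N" using PF_bound[OF assms] by blast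
  have "L 1 = UNIV" using assms(1) unfolding positive_filtration_def by blast
  then have P1: "1 \<le> (1::nat) \<and> x \<in> L 1" by simp
  have "1 \<le> (GREATEST w. 1 \<le> w \<and> x \<in> L w) \<and> x \<in> L (GREATEST w. 1 \<le> w \<and> x \<in> L w)"
    by (rule GreatestI_nat[where P="\<lambda>w. 1 \<le> w \<and> x \<in> L w", OF P1]) (use N in blast)
  then show ?thesis unfolding weight_def by blast
qed

lemma weight_ge:
  assumes "positive_filtration br L" "x \<noteq> 0" "1 \<le> c" "x \<in> L c"
  shows "c \<le> weight L x"
proof -
  obtain N where N: "\<forall>c. x \<in> L c \<longrightarrow> c \<le> N" using PF_bound[OF assms(1,2)] by blast
  show ?thesis unfolding weight_def
    by (rule Greatest_le_nat[where P="\<lambda>w. 1 \<le> w \<and> x \<in> L w"]) (use N assms(3,4) in blast)+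
qed

lemma in_L_if:
  assumes "positive_filtration br L" "x \<noteq> 0" "1 \<le> c" "c \<le> weight L x"
  shows "x \<in> L c"
  using weight_in[OF assms(1,2)] PF_mono[OF assms(1,3,4)] by blast

lemma basis_nz:
  assumes "ordered_basis f m" "i \<in> {1..m}"
  shows "f i \<noteq> 0"
proof
  assume "f i = 0"
  then have "0 \<in> f ` {1..m}" using assms(2) by force
  then show False using assms(1) real_vector.dependent_zero unfolding ordered_basis_def by blast
qed

lemma adapted_sub:
  assumes "adapted_basis L f m" "1 \<le> c" "i \<le> m" "f i \<notin> L c"
  shows "L c \<subseteq> span (f ` {i+1..m})"
proof -
  have Lc: "L c = span (f ` {m + 1 - dim (L c) .. m})" using assms(1,2) unfolding adapted_basis_def by blast
  have "\<not> (m + 1 - dim (L c) \<le> i)"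
  proof
    assume "m + 1 - dim (L c) \<le> i"
    then have "f i \<in> f ` {m + 1 - dim (L c) .. m}" using assms(3) by auto
    then have "f i \<in> L c" using Lc real_vector.span_base by blast
    then show False using assms(4) by blast
  qed
  then have "{m + 1 - dim (L c) .. m} \<subseteq> {i+1..m}" by auto
  then show ?thesis using Lc real_vector.span_mono image_mono by metis
qed

lemma span_eq_card:
  assumes "finite F" "independent E" "card E = card F" "span E \<subseteq> span F"
  shows "span E = span F"
proof -
  have fE: "finite E" using assms(2) real_vector.independent_span_bound[OF assms(1) assms(2)]
      assms(4) real_vector.span_superset by blast
  have "F \<subseteq> span E"
  proof
    fix x assume x: "x \<in> F"
    show "x \<in> span E"
    proof (rule ccontr)
      assume nx: "x \<notin> span E"
      then have xE: "x \<notin> E" using real_vector.span_base by blast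
      have ind: "independent (insert x E)" using assms(2) nx xE by (simp add: real_vector.independent_insert)
      have "insert x E \<subseteq> span F" using x assms(4) real_vector.span_superset real_vector.span_base by blast
      then have "card (insert x E) \<le> card F" using real_vector.independent_span_bound[OF assms(1) ind] by blast
      then show False using fE xE assms(3) by simp
    qed
  qed
  then have "span F \<subseteq> span E" using real_vector.span_minimal real_vector.subspace_span by blast
  then show ?thesis using assms(4) by blast
qed

lemma card_img:
  assumes "ordered_basis f m" "1 \<le> i"
  shows "card (f ` {i..m}) = m + 1 - i"
proof -
  have "inj_on f {i..m}" using assms unfolding ordered_basis_def by (auto intro: inj_on_subset)
  then show ?thesis by (simp add: card_image)
qed

lemma indep_img:
  assumes "ordered_basis f m" "1 \<le> i"
  shows "independent (f ` {i..m})"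
  using assms real_vector.independent_mono unfolding ordered_basis_def
  by (metis atLeastatMost_subset_iff image_mono order_refl)

theorem lemma3p2:
  fixes br :: "'a::real_vector \<Rightarrow> 'a \<Rightarrow> 'a" and n :: nat and e :: "nat \<Rightarrow> 'a"
  assumes fil: "filiform br (2*n)"
    and basis: "ordered_basis e (2*n)"
    and lcs_span: "\<forall>k. 1 \<le> k \<and> k \<le> 2*n - 2 \<longrightarrow> lcs br k = span (e ` {2+k..2*n})"
    and nonzero: "\<exists>k. 3 \<le> k \<and> k \<le> n \<and> br (e k) (e (2*n + 1 - k)) \<noteq> 0"
  shows "\<not> (\<exists>L f. positive_filtration br L \<and> adapted_basis L f (2*n) \<and>
           (let w = (\<lambda>i. weight L (f i)); m = 2*n; hat = (\<lambda>i. m + 1 - i) in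
             \<comment> \<open>(F1)\<close>
             0 < w 1 \<and> (\<forall>i j. 1 \<le> i \<and> i \<le> j \<and> j \<le> m \<longrightarrow> w i \<le> w j) \<and>
             \<comment> \<open>(F2)\<close>
             (\<forall>i\<in>{1..m}. w i + w (hat i) \<ge> w m \<and> w i + w (hat i) > w (m - 1)) \<and>
             \<comment> \<open>(F3)\<close>
             (\<forall>i\<in>{1..m}. w i + w (hat i) = w m \<and> w i \<noteq> w (hat i) \<longrightarrow>
                multiplicity_w w m (w i) \<ge> 2 \<or> multiplicity_w w m (w (hat i)) \<ge> 2) \<and>
             \<comment> \<open>(F4)\<close>
             (\<forall>i\<in>{1..m}. w i + w (hat i) = w m \<and> w i = w (hat i) \<longrightarrow>
                i = hat i \<or> multiplicity_w w m (w i) > 2)))"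
proof
  assume "\<exists>L f. positive_filtration br L \<and> adapted_basis L f (2*n) \<and>
           (let w = (\<lambda>i. weight L (f i)); m = 2*n; hat = (\<lambda>i. m + 1 - i) in
             0 < w 1 \<and> (\<forall>i j. 1 \<le> i \<and> i \<le> j \<and> j \<le> m \<longrightarrow> w i \<le> w j) \<and>
             (\<forall>i\<in>{1..m}. w i + w (hat i) \<ge> w m \<and> w i + w (hat i) > w (m - 1)) \<and>
             (\<forall>i\<in>{1..m}. w i + w (hat i) = w m \<and> w i \<noteq> w (hat i) \<longrightarrow>
                multiplicity_w w m (w i) \<ge> 2 \<or> multiplicity_w w m (w (hat i)) \<ge> 2) \<and>
             (\<forall>i\<in>{1..m}. w i + w (hat i) = w m \<and> w i = w (hat i) \<longrightarrow>
                i = hat i \<or> multiplicity_w w m (w i) > 2))"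
  then obtain L f where PF: "positive_filtration br L" and AB: "adapted_basis L f (2*n)"
    and F1: "\<forall>i j. 1 \<le> i \<and> i \<le> j \<and> j \<le> 2*n \<longrightarrow> weight L (f i) \<le> weight L (f j)"
    and F2: "\<forall>i\<in>{1..2*n}. weight L (f i) + weight L (f (2*n+1-i)) \<ge> weight L (f (2*n))"
    and F3: "\<forall>i\<in>{1..2*n}. weight L (f i) + weight L (f (2*n+1-i)) = weight L (f (2*n)) \<and>
               weight L (f i) \<noteq> weight L (f (2*n+1-i)) \<longrightarrow>
                multiplicity_w (\<lambda>i. weight L (f i)) (2*n) (weight L (f i)) \<ge> 2 \<or>
                multiplicity_w (\<lambda>i. weight L (f i)) (2*n) (weight L (f (2*n+1-i))) \<ge> 2"
    unfolding Let_def by blast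
  define m where "m = 2*n"
  define w where "w = (\<lambda>i. weight L (f i))"
  obtain k where k: "3 \<le> k" "k \<le> n" "br (e k) (e (2*n + 1 - k)) \<noteq> 0" using nonzero by blast
  have n3: "n \<ge> 3" using k by simp
  have OBf: "ordered_basis f m" using AB unfolding adapted_basis_def m_def by blast
  have OBe: "ordered_basis e m" using basis unfolding m_def by blast
  have L1: "L 1 = UNIV" using PF unfolding positive_filtration_def by blast
  have subL: "\<And>c. 1 \<le> c \<Longrightarrow> subspace (L c)" using PF unfolding positive_filtration_def by blast
  have brL: "\<And>i j x y. 1 \<le> i \<Longrightarrow> 1 \<le> j \<Longrightarrow> x \<in> L i \<Longrightarrow> y \<in> L j \<Longrightarrow> br x y \<in> L (i + j)"
    using PF unfolding positive_filtration_def by blast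
  have LA: "lie_algebra br" using fil unfolding filiform_def by blast
  have fnz: "\<And>i. i \<in> {1..m} \<Longrightarrow> f i \<noteq> 0" using basis_nz[OF OBf] by blast
  have w1: "\<And>i. i \<in> {1..m} \<Longrightarrow> 1 \<le> w i \<and> f i \<in> L (w i)"
    unfolding w_def using weight_in[OF PF] fnz by blast
  have wmono: "\<And>i j. 1 \<le> i \<Longrightarrow> i \<le> j \<Longrightarrow> j \<le> m \<Longrightarrow> w i \<le> w j"
    using F1 unfolding w_def m_def by blast
  have AB': "adapted_basis L f m" using AB unfolding m_def .
  have Usub: "\<And>i. 1 \<le> i \<Longrightarrow> i \<le> m \<Longrightarrow> span (f ` {i..m}) \<subseteq> L (w i)"
  proof -
    fix i assume i: "1 \<le> i" "i \<le> m"
    have "f ` {i..m} \<subseteq> L (w i)"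
    proof
      fix x assume "x \<in> f ` {i..m}"
      then obtain j where j: "j \<in> {i..m}" "x = f j" by blast
      have "f j \<in> L (w j)" using w1 j i by auto
      moreover have "L (w j) \<subseteq> L (w i)" using PF_mono[OF PF] w1 wmono i j by auto
      ultimately show "x \<in> L (w i)" using j by blast
    qed
    moreover have "subspace (L (w i))" using subL w1 i by auto
    ultimately show "span (f ` {i..m}) \<subseteq> L (w i)" by (rule real_vector.span_minimal)
  qed
  have notin: "\<And>i. i \<in> {1..m} \<Longrightarrow> f i \<notin> L (w i + 1)"
    using weight_ge[OF PF] fnz unfolding w_def by fastforce
  have lcsE: "\<And>j. 1 \<le> j \<Longrightarrow> j + 2 \<le> m \<Longrightarrow> lcs br j = span (e ` {j+2..m})"
    using lcs_span unfolding m_def by (simp add: add.commute)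
  have eqspan: "\<And>i. 1 \<le> i \<Longrightarrow> span (e ` {i..m}) \<subseteq> span (f ` {i..m}) \<Longrightarrow> span (e ` {i..m}) = span (f ` {i..m})"
  proof -
    fix i :: nat assume i: "1 \<le> i" and sub: "span (e ` {i..m}) \<subseteq> span (f ` {i..m})"
    show "span (e ` {i..m}) = span (f ` {i..m})"
      by (rule span_eq_card[OF _ indep_img[OF OBe i] _ sub]) (simp_all add: card_img[OF OBe i] card_img[OF OBf i])
  qed
  have C: "\<And>i. 3 \<le> i \<Longrightarrow> i \<le> m \<Longrightarrow> lcs br (i-2) = span (f ` {i..m}) \<and> w (i-1) < w i"
  proof -
    fix i :: nat assume "3 \<le> i" "i \<le> m"
    then show "lcs br (i-2) = span (f ` {i..m}) \<and> w (i-1) < w i"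
    proof (induction i rule: nat_induct_at_least)
      case base
      have m3: "3 \<le> m" using base n3 unfolding m_def by simp
      have w2: "1 \<le> w 2" using w1 m3 by auto
      have B: "span (f ` {2..m}) \<subseteq> L (w 2)" using Usub m3 by simp
      have univ: "\<And>x. \<exists>a. x - a *\<^sub>R f 1 \<in> L (w 2)"
      proof -
        fix x
        have "{1..m} = insert 1 {2..m}" using m3 by auto
        then have "x \<in> span (insert (f 1) (f ` {2..m}))" using OBf unfolding ordered_basis_def by auto
        then show "\<exists>a. x - a *\<^sub>R f 1 \<in> L (w 2)" using B real_vector.span_insert by blast
      qed
      have S2: "subspace (L (w 2 + 1))" using subL by simp
      have f1L: "f 1 \<in> L 1" using L1 by simp
      have br_in: "br x y \<in> L (w 2 + 1)" for x y
      proof -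
        obtain a where a: "x - a *\<^sub>R f 1 \<in> L (w 2)" using univ by blast
        obtain b where b: "y - b *\<^sub>R f 1 \<in> L (w 2)" using univ by blast
        define x' where "x' = x - a *\<^sub>R f 1"
        define y' where "y' = y - b *\<^sub>R f 1"
        have lin1: "\<And>x. linear (br x)" and lin2: "\<And>y. linear (\<lambda>x. br x y)" and alt: "\<And>x. br x x = 0"
          using LA unfolding lie_algebra_def by blast+
        have xe: "x = a *\<^sub>R f 1 + x'" and ye: "y = b *\<^sub>R f 1 + y'" unfolding x'_def y'_def by simp_all
        have "br x y = br (a *\<^sub>R f 1) (b *\<^sub>R f 1) + br (a *\<^sub>R f 1) y' + (br x' (b *\<^sub>R f 1) + br x' y')"
          unfolding xe ye using linear_add[OF lin1] linear_add[OF lin2]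
          by (simp add: algebra_simps)
        also have "\<dots> = (a * b) *\<^sub>R br (f 1) (f 1) + a *\<^sub>R br (f 1) y' + (b *\<^sub>R br x' (f 1) + br x' y')"
          using linear_scale[OF lin1] linear_scale[OF lin2] by simp
        also have "\<dots> = a *\<^sub>R br (f 1) y' + (b *\<^sub>R br x' (f 1) + br x' y')" using alt by simp
        finally have eq: "br x y = a *\<^sub>R br (f 1) y' + (b *\<^sub>R br x' (f 1) + br x' y')" .
        have t1: "br (f 1) y' \<in> L (w 2 + 1)" using brL[OF _ w2 f1L] b y'_def by (simp add: add.commute)
        have t2: "br x' (f 1) \<in> L (w 2 + 1)" using brL[OF w2 _ _ f1L] a x'_def by simp
        have t3: "br x' y' \<in> L (w 2 + w 2)" using brL[OF w2 w2] a b x'_def y'_def by simp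
        have "L (w 2 + w 2) \<subseteq> L (w 2 + 1)" using PF_mono[OF PF] w2 by simp
        with t3 have t3': "br x' y' \<in> L (w 2 + 1)" by blast
        show ?thesis unfolding eq using S2 t1 t2 t3'
          by (simp add: real_vector.subspace_add real_vector.subspace_scale)
      qed
      have "lcs br 1 = span {br a b | a b. a \<in> UNIV \<and> b \<in> UNIV}"
        by (simp add: bracket_set_def)
      also have "\<dots> \<subseteq> L (w 2 + 1)" using br_in S2 by (intro real_vector.span_minimal) auto
      finally have l1: "lcs br 1 \<subseteq> L (w 2 + 1)" .
      have "L (w 2 + 1) \<subseteq> span (f ` {3..m})"
        using adapted_sub[OF AB' _ _ notin[of 2]] m3 by simp
      moreover have "lcs br 1 = span (e ` {3..m})" using lcsE[of 1] m3 by (simp add: numeral_3_eq_3)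
      ultimately have "span (e ` {3..m}) \<subseteq> span (f ` {3..m})" using l1 by simp
      then have E: "span (e ` {3..m}) = span (f ` {3..m})" using eqspan by simp
      have l1e: "lcs br 1 = span (f ` {3..m})" using lcsE[of 1] m3 E by (simp add: numeral_3_eq_3)
      have "f 3 \<in> span (f ` {3..m})" using m3 by (intro real_vector.span_base) auto
      then have "f 3 \<in> L (w 2 + 1)" using l1 l1e by blast
      then have "w 2 + 1 \<le> w 3" using weight_ge[OF PF fnz[of 3]] m3 unfolding w_def by simp
      then show ?case using l1e by simp
    next
      case (Suc i)
      have IH: "lcs br (i-2) = span (f ` {i..m})" using Suc by simp
      have im: "i + 1 \<le> m" "3 \<le> i" using Suc by auto
      have wi: "1 \<le> w i" using w1 im by auto
      have S: "subspace (L (w i + 1))" using subL by simp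
      have "lcs br (i-1) = bracket_set br UNIV (lcs br (i-2))"
      proof -
        have "i - 1 = Suc (i - 2)" using im by simp
        then show ?thesis by simp
      qed
      also have "\<dots> \<subseteq> L (w i + 1)" unfolding bracket_set_def IH
      proof (intro real_vector.span_minimal S)
        show "{br a b |a b. a \<in> UNIV \<and> b \<in> span (f ` {i..m})} \<subseteq> L (w i + 1)"
        proof clarify
          fix a b assume "b \<in> span (f ` {i..m})"
          moreover have "span (f ` {i..m}) \<subseteq> L (w i)" using Usub[of i] im by simp
          ultimately have "b \<in> L (w i)" by blast
          then show "br a b \<in> L (w i + 1)" using brL[of 1 "w i" a b] wi L1 by (simp add: add.commute)
        qed
      qed
      finally have l1: "lcs br (i-1) \<subseteq> L (w i + 1)" .
      have "L (w i + 1) \<subseteq> span (f ` {i+1..m})"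
        using adapted_sub[OF AB' _ _ notin[of i]] im by simp
      moreover have le: "lcs br (i-1) = span (e ` {i+1..m})" using lcsE[of "i-1"] im by simp
      ultimately have "span (e ` {i+1..m}) \<subseteq> span (f ` {i+1..m})" using l1 by simp
      then have E: "span (e ` {i+1..m}) = span (f ` {i+1..m})" using eqspan by simp
      have "f (i+1) \<in> span (f ` {i+1..m})" using im by (intro real_vector.span_base) auto
      then have "f (i+1) \<in> L (w i + 1)" using l1 le E by blast
      then have "w i + 1 \<le> w (i+1)" using weight_ge[OF PF fnz[of "i+1"]] im unfolding w_def by simp
      then show ?case using le E im by simp
    qed
  qed
  have strict: "\<And>i j. 2 \<le> i \<Longrightarrow> i < j \<Longrightarrow> j \<le> m \<Longrightarrow> w i < w j"
  proof -
    fix i j :: nat assume a: "2 \<le> i" "i < j" "j \<le> m"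
    have "Suc i \<le> j \<Longrightarrow> j \<le> m \<Longrightarrow> w i < w j" for j
    proof (induction j rule: nat_induct_at_least)
      case base then show ?case using C[of "Suc i"] a(1) by simp
    next
      case (Suc j) then show ?case using C[of "Suc j"] a(1) by simp
    qed
    then show "w i < w j" using a by simp
  qed
  have mult1: "\<And>j. 3 \<le> j \<Longrightarrow> j \<le> m \<Longrightarrow> multiplicity_w w m (w j) = 1"
  proof -
    fix j :: nat assume j: "3 \<le> j" "j \<le> m"
    have "{i \<in> {1..m}. w i = w j} = {j}"
    proof (intro equalityI subsetI)
      fix i assume i: "i \<in> {i \<in> {1..m}. w i = w j}"
      show "i \<in> {j}"
      proof (rule ccontr)
        assume "i \<notin> {j}"
        then consider "i < j" | "j < i" by fastforce
        then show False
        proof cases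
          case 1
          then have "w i < w j"
          proof (cases "i = 1")
            case True then show ?thesis using wmono[of 1 2] strict[of 2 j] j by simp
          next
            case False then show ?thesis using strict[of i j] i 1 j by simp
          qed
          then show False using i by simp
        next
          case 2 then show False using strict[of j i] i j by simp
        qed
      qed
    qed (use j in auto)
    then show "multiplicity_w w m (w j) = 1" unfolding multiplicity_w_def by simp
  qed
  define kh where "kh = 2*n + 1 - k"
  have kh: "n + 1 \<le> kh" "kh \<le> m - 2" "k < kh" using k unfolding kh_def m_def by auto
  have kmm: "k \<le> m" "kh \<le> m" "3 \<le> kh" using k kh n3 unfolding m_def by auto
  have ek: "e k \<in> L (w k)"
  proof -
    have "e k \<in> span (e ` {k..m})" using k kh by (intro real_vector.span_base) auto
    moreover have "Suc (Suc (k-2)) = k" using k by simp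
    ultimately have "e k \<in> lcs br (k-2)" using lcsE[of "k-2"] k kh by (simp add: m_def)
    then show ?thesis using C[of k] Usub[of k] k kmm by auto
  qed
  have ekh: "e kh \<in> L (w kh)"
  proof -
    have "e kh \<in> span (e ` {kh..m})" using k kh by (intro real_vector.span_base) auto
    moreover have "Suc (Suc (kh-2)) = kh" using kh n3 by simp
    ultimately have "e kh \<in> lcs br (kh-2)" using lcsE[of "kh-2"] k kh n3 by (simp add: m_def)
    then show ?thesis using C[of kh] Usub[of kh] k kmm by auto
  qed
  have wk1: "1 \<le> w k" "1 \<le> w kh" using w1 k kh by auto
  have brin: "br (e k) (e kh) \<in> L (w k + w kh)" using brL[OF wk1 ek ekh] .
  have brnz: "br (e k) (e kh) \<noteq> 0" using k unfolding kh_def by simp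
  have "f m \<in> L (w k + w kh)"
  proof (rule ccontr)
    assume "f m \<notin> L (w k + w kh)"
    then have "L (w k + w kh) \<subseteq> span (f ` {m+1..m})" using adapted_sub[OF AB', of "w k + w kh" m] wk1 by simp
    then show False using brin brnz by auto
  qed
  then have le: "w k + w kh \<le> w m" using weight_ge[OF PF fnz[of m]] kh wk1 unfolding w_def by simp
  have km: "k \<in> {1..2*n}" and hk: "2*n+1-k = kh" using k unfolding kh_def by auto
  have ge: "w k + w kh \<ge> w m" using F2 km hk unfolding w_def m_def by metis
  have neq: "w k \<noteq> w kh" using strict[of k kh] k kh kmm by simp
  have "multiplicity_w w m (w k) \<ge> 2 \<or> multiplicity_w w m (w kh) \<ge> 2"
    using F3 km hk le ge neq unfolding w_def m_def by (metis order_antisym)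
  then show False using mult1[of k] mult1[of kh] k kmm by simp
qed

end
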